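(* In the setting of the context, let $\underline b^{j}$ denote the lowest bid in the $n_j$-bidder auction and, for $\gamma\in[0,1]$, let $b^j_\gamma$ be the $\gamma$-quantile of $G(\cdot\mid n_j)$, $j=1,2$. Then $$\theta=\frac{n_2(n_1-1)g(\underline b^{2}\mid n_2)-n_1(n_2-1)g(\underline b^{1}\mid n_1)}{(n_1-1)g(\underline b^{2}\mid n_2)-(n_2-1)g(\underline b^{1}\mid n_1)},$$ the function $H(\gamma):=D(\gamma)/D'(\gamma)$ satisfies $$H(\gamma)=\frac{b^2_\gamma-b^1_\gamma}{1-\theta}\left[\frac{1}{(n_1-1)g(b^1_\gamma\mid n_1)}-\frac{1}{(n_2-1)g(b^2_\gamma\mid n_2)}\right]^{-1},$$ $D(\gamma)=\exp\!\left[-\int_\gamma^1 \frac{dt}{H(t)}\right]$, and the $\gamma$-quantile $v_\gamma$ of $F_0$ satisfies, for $j=1,2$, $$v_\gamma=b^j_\gamma+\frac{(1-\theta)H(\gamma)}{(n_j-1)g(b^j_\gamma\mid n_j)}.$$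
   Context: First-price auctions (no reserve price) with $n\in\{n_1,n_2\}$ bidders, $2\le n_1<n_2$. Bidders' values are i.i.d. from $F_0$ on $[\underline v,\overline v]$ with continuous density $f_0>0$. Utility is CRRA, $u(w)=w^{1-\theta}/(1-\theta)$, $\theta\in[0,1)$. Bidders have maxmin expected utility over a weakly compact convex set $\Gamma$ of strictly increasing $C^1$ distributions on $[\underline v,\overline v]$ containing $F_0$ with least element $F^*\in\Gamma$ ($F^*\le F$ pointwise for all $F\in\Gamma$) having density $f^*>0$; $D(\gamma):=F^*(F_0^{-1}(\gamma))$, which is strictly increasing, $C^1$, with $D(0)=0$, $D(1)=1$, $D'(0)>0$. $F_0$ and $\Gamma$ do not depend on $n$ (exogenous participation). For $n$ bidders the symmetric equilibrium is a strictly increasing differentiable $\beta_n$ such that for every value $v$, $x=v$ maximizes $u[v-\beta_n(x)]D[F_0(x)]^{n-1}$; $G(\cdot\mid n)$ is the distribution of $\beta_n(v)$, $v\sim F_0$, with density $g(\cdot\mid n)$, assumed positive and continuous on its support, and $\underline b^j=\beta_{n_j}(\underline v)$. *)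

theory Defs
  imports "HOL-Analysis.Analysis"
begin

definition crra :: "real \<Rightarrow> real \<Rightarrow> real" where
  "crra \<theta> w = (if 0 \<le> w then w powr (1 - \<theta>) / (1 - \<theta>)
                else - ((- w) powr (1 - \<theta>)) / (1 - \<theta>))"

definition C1_cdf_on :: "real \<Rightarrow> real \<Rightarrow> (real \<Rightarrow> real) \<Rightarrow> (real \<Rightarrow> real) \<Rightarrow> bool" where
  "C1_cdf_on a b F f \<longleftrightarrow> F a = 0 \<and> F b = 1 \<and> strict_mono_on {a..b} F \<and>
     continuous_on {a..b} f \<and>
     (\<forall>x\<in>{a..b}. (F has_real_derivative f x) (at x within {a..b}))"

definition bid_cdf :: "(real \<Rightarrow> real) \<Rightarrow> real \<Rightarrow> real \<Rightarrow> (real \<Rightarrow> real) \<Rightarrow> real \<Rightarrow> real" where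
  "bid_cdf F0 vl vh \<beta> b =
     (if b < \<beta> vl then 0 else if \<beta> vh \<le> b then 1
      else F0 (the_inv_into {vl..vh} \<beta> b))"

definition quantile_on :: "real \<Rightarrow> real \<Rightarrow> (real \<Rightarrow> real) \<Rightarrow> real \<Rightarrow> real" where
  "quantile_on lo hi F \<gamma> = (THE x. x \<in> {lo..hi} \<and> F x = \<gamma>)"

definition bid_quantile :: "(real \<Rightarrow> real) \<Rightarrow> real \<Rightarrow> real \<Rightarrow> (real \<Rightarrow> real) \<Rightarrow> real \<Rightarrow> real" where
  "bid_quantile F0 vl vh \<beta> \<gamma> = quantile_on (\<beta> vl) (\<beta> vh) (bid_cdf F0 vl vh \<beta>) \<gamma>"

definition sym_equilibrium ::
  "real \<Rightarrow> real \<Rightarrow> real \<Rightarrow> (real \<Rightarrow> real) \<Rightarrow> (real \<Rightarrow> real) \<Rightarrow> nat \<Rightarrow> (real \<Rightarrow> real) \<Rightarrow> bool" where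
  "sym_equilibrium \<theta> vl vh F0 D n \<beta> \<longleftrightarrow>
     strict_mono_on {vl..vh} \<beta> \<and>
     (\<forall>x\<in>{vl..vh}. \<beta> differentiable (at x within {vl..vh})) \<and>
     (\<forall>v\<in>{vl..vh}. \<forall>x\<in>{vl..vh}.
        crra \<theta> (v - \<beta> x) * D (F0 x) ^ (n - 1) \<le> crra \<theta> (v - \<beta> v) * D (F0 v) ^ (n - 1))"

end

theory Submission
  imports Defs
begin

lemma cont_pt:
  assumes "continuous_on S f" "x \<in> S" "0 < e"
  shows "\<exists>d>0. \<forall>x'\<in>S. dist x' x < d \<longrightarrow> dist (f x') (f x) < e"
  using assms unfolding continuous_on_iff by blast

lemma deriv_pos_left:
  fixes \<delta> :: "real \<Rightarrow> real"
  assumes "(\<delta> has_real_derivative c) (at z within S)" "0 < c"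
  shows "\<exists>\<eta>>0. \<forall>y\<in>S. y \<noteq> z \<and> dist y z < \<eta> \<longrightarrow> 0 < (\<delta> y - \<delta> z) / (y - z)"
proof -
  have "((\<lambda>y. (\<delta> y - \<delta> z) / (y - z)) \<longlongrightarrow> c) (at z within S)"
    using assms(1) unfolding has_field_derivative_iff .
  from order_tendstoD(1)[OF this assms(2)]
  show ?thesis unfolding eventually_at .
qed

lemma pos_after_zero:
  fixes \<delta> d :: "real \<Rightarrow> real"
  assumes ab: "a < b" and c: "continuous_on {a..b} \<delta>" and z: "\<delta> a = 0"
    and der: "\<And>z. z \<in> {a..b} \<Longrightarrow> \<delta> z = 0 \<Longrightarrow>
       (\<delta> has_real_derivative d z) (at z within {a..b}) \<and> 0 < d z"
  shows "\<And>x. x \<in> {a<..b} \<Longrightarrow> 0 < \<delta> x"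
proof (rule ccontr)
  fix p assume p: "p \<in> {a<..b}" and np: "\<not> 0 < \<delta> p"
  have aI: "a \<in> {a..b}" using ab by auto
  obtain \<eta> where \<eta>: "\<eta> > 0" "\<forall>y\<in>{a..b}. y \<noteq> a \<and> dist y a < \<eta> \<longrightarrow> 0 < (\<delta> y - \<delta> a) / (y - a)"
    using deriv_pos_left[of \<delta> "d a" a "{a..b}"] der[OF aI z] by blast
  have near: "0 < \<delta> y" if "y \<in> {a<..b}" "y < a + \<eta>" for y
  proof -
    have "0 < (\<delta> y - \<delta> a) / (y - a)" using \<eta> that by (auto simp: dist_real_def)
    then show ?thesis using z that by (simp add: zero_less_divide_iff)
  qed
  have pe: "a + \<eta> \<le> p" using near[OF p] np by force
  define c0 where "c0 = a + \<eta> / 2"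
  have c0: "a < c0" "c0 < p" "0 < \<delta> c0" using \<eta> pe p near[of c0] by (auto simp: c0_def)
  define T where "T = {c0..p} \<inter> \<delta> -` {..0}"
  have cT: "continuous_on {c0..p} \<delta>" using c by (rule continuous_on_subset) (use c0 p in auto)
  have Tc: "closed T" unfolding T_def by (rule continuous_closed_preimage[OF cT]) auto
  have pT: "p \<in> T" using np c0 by (auto simp: T_def)
  then have Tne: "T \<noteq> {}" by auto
  have Tb: "bdd_below T" unfolding T_def by (rule bdd_belowI[of _ c0]) auto
  define zz where "zz = Inf T"
  have zT: "zz \<in> T" unfolding zz_def by (rule closed_contains_Inf[OF Tne(1) Tb Tc])
  have zz: "c0 \<le> zz" "zz \<le> p" "\<delta> zz \<le> 0" using zT by (auto simp: T_def)
  have zc: "c0 < zz" using zz c0 by (cases "zz = c0") auto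
  have below: "0 < \<delta> y" if "c0 \<le> y" "y < zz" for y
  proof (rule ccontr)
    assume "\<not> 0 < \<delta> y"
    then have "y \<in> T" using that zz by (auto simp: T_def)
    then have "zz \<le> y" unfolding zz_def using Tb by (rule cInf_lower)
    then show False using that by simp
  qed
  have zI: "zz \<in> {a..b}" using zz c0 p by auto
  show False
  proof (cases "\<delta> zz = 0")
    case False
    then have neg: "0 < - \<delta> zz" using zz by simp
    obtain d1 where d1: "d1 > 0" "\<forall>y\<in>{a..b}. dist y zz < d1 \<longrightarrow> dist (\<delta> y) (\<delta> zz) < - \<delta> zz"
      using cont_pt[OF c zI neg] by blast
    define y where "y = max c0 (zz - d1 / 2)"
    have y: "c0 \<le> y" "y < zz" "y \<in> {a..b}" "dist y zz < d1" using zc d1 c0 zz p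
      by (auto simp: y_def dist_real_def)
    then have "dist (\<delta> y) (\<delta> zz) < - \<delta> zz" using d1(2) by blast
    then have "\<bar>\<delta> y - \<delta> zz\<bar> < - \<delta> zz" by (simp add: dist_real_def)
    then have "\<delta> y < 0" by linarith
    then show False using below[OF y(1,2)] by simp
  next
    case True
    obtain \<eta>2 where \<eta>2: "\<eta>2 > 0" "\<forall>y\<in>{a..b}. y \<noteq> zz \<and> dist y zz < \<eta>2 \<longrightarrow> 0 < (\<delta> y - \<delta> zz) / (y - zz)"
      using deriv_pos_left[of \<delta> "d zz" zz "{a..b}"] der[OF zI True] by blast
    define y where "y = max c0 (zz - \<eta>2 / 2)"
    have y: "c0 \<le> y" "y < zz" "y \<in> {a..b}" "dist y zz < \<eta>2" using zc \<eta>2 c0 zz p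
      by (auto simp: y_def dist_real_def)
    then have "0 < (\<delta> y - \<delta> zz) / (y - zz)" using \<eta>2 by auto
    then have "\<delta> y < 0" using True y(2) by (simp add: zero_less_divide_iff)
    then show False using below[OF y(1,2)] by simp
  qed
qed

lemma D_integral:
  fixes D Dp :: "real \<Rightarrow> real"
  assumes Dd: "\<forall>\<gamma>\<in>{0..1}. (D has_real_derivative Dp \<gamma>) (at \<gamma> within {0..1})"
    and Dpos: "\<And>t. t \<in> {0<..1} \<Longrightarrow> 0 < D t" and D1: "D 1 = 1"
    and \<gamma>: "\<gamma> \<in> {0<..1}"
  shows "D \<gamma> = exp (- integral {\<gamma>..1} (\<lambda>t. 1 / (D t / Dp t)))"
proof -
  have "((\<lambda>t. Dp t / D t) has_integral (ln (D 1) - ln (D \<gamma>))) {\<gamma>..1}"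
  proof (rule fundamental_theorem_of_calculus)
    show "\<gamma> \<le> 1" using \<gamma> by auto
    fix t assume t: "t \<in> {\<gamma>..1}"
    have t0: "t \<in> {0..1}" "0 < D t" using t \<gamma> Dpos[of t] by auto
    have "(D has_real_derivative Dp t) (at t within {\<gamma>..1})"
      using DERIV_subset[OF Dd[rule_format, OF t0(1)]] \<gamma> by auto
    from DERIV_chain2[OF DERIV_ln[OF t0(2)] this]
    have "((\<lambda>t. ln (D t)) has_real_derivative Dp t / D t) (at t within {\<gamma>..1})"
      by (simp add: divide_inverse mult.commute)
    then show "((\<lambda>t. ln (D t)) has_vector_derivative Dp t / D t) (at t within {\<gamma>..1})"
      using has_real_derivative_iff_has_vector_derivative by blast
  qed
  then have "integral {\<gamma>..1} (\<lambda>t. 1 / (D t / Dp t)) = - ln (D \<gamma>)"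
    using D1 by (simp add: integral_unique)
  then show ?thesis using Dpos[OF \<gamma>] by simp
qed

locale eqm =
  fixes \<theta> vl vh :: real and n :: nat and F0 f0 D Dp \<beta> g :: "real \<Rightarrow> real"
  assumes vlh: "vl < vh" and n2: "2 \<le> n"
    and th0: "0 \<le> \<theta>" and th1: "\<theta> < 1"
    and F0: "C1_cdf_on vl vh F0 f0" and f0pos: "\<forall>v\<in>{vl..vh}. 0 < f0 v"
    and Dd: "\<forall>\<gamma>\<in>{0..1}. (D has_real_derivative Dp \<gamma>) (at \<gamma> within {0..1})"
    and Dpc: "continuous_on {0..1} Dp" and Dmono: "strict_mono_on {0..1} D"
    and D0: "D 0 = 0" and D1: "D 1 = 1" and Dp0: "0 < Dp 0"
    and eq: "sym_equilibrium \<theta> vl vh F0 D n \<beta>"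
    and gd: "\<forall>b\<in>{\<beta> vl..\<beta> vh}.
                 (bid_cdf F0 vl vh \<beta> has_real_derivative g b) (at b within {\<beta> vl..\<beta> vh})"
    and gpos: "\<forall>b\<in>{\<beta> vl..\<beta> vh}. 0 < g b"
    and gc: "continuous_on {\<beta> vl..\<beta> vh} g"
begin

lemma F0_0: "F0 vl = 0" and F0_1: "F0 vh = 1" and F0m: "strict_mono_on {vl..vh} F0"
  and F0d: "\<And>x. x\<in>{vl..vh} \<Longrightarrow> (F0 has_real_derivative f0 x) (at x within {vl..vh})"
  and f0c: "continuous_on {vl..vh} f0"
  using F0 unfolding C1_cdf_on_def by auto

lemma F0c: "continuous_on {vl..vh} F0"
  unfolding continuous_on_eq_continuous_within
  using F0d DERIV_continuous by blast

lemma F0_range: "x \<in> {vl..vh} \<Longrightarrow> F0 x \<in> {0..1}"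
proof -
  assume x: "x \<in> {vl..vh}"
  have "F0 vl \<le> F0 x" using strict_mono_onD[OF F0m, of vl x] x vlh by (cases "x = vl") auto
  moreover have "F0 x \<le> F0 vh" using strict_mono_onD[OF F0m, of x vh] x vlh by (cases "x = vh") auto
  ultimately show ?thesis using F0_0 F0_1 by auto
qed

lemma F0_pos: "x \<in> {vl<..vh} \<Longrightarrow> 0 < F0 x"
  using F0_0 strict_mono_onD[OF F0m, of vl x] vlh by auto

lemma F0_lt1: "x \<in> {vl..<vh} \<Longrightarrow> F0 x < 1"
  using F0_1 strict_mono_onD[OF F0m, of x vh] vlh by auto

lemma D_pos: "\<gamma> \<in> {0<..1} \<Longrightarrow> 0 < D \<gamma>"
  using D0 strict_mono_onD[OF Dmono, of 0 \<gamma>] by auto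

lemma beta_m: "strict_mono_on {vl..vh} \<beta>"
  and beta_diff: "\<And>x. x\<in>{vl..vh} \<Longrightarrow> \<beta> differentiable (at x within {vl..vh})"
  and eqm: "\<And>v x. v\<in>{vl..vh} \<Longrightarrow> x\<in>{vl..vh} \<Longrightarrow>
        crra \<theta> (v - \<beta> x) * D (F0 x) ^ (n - 1) \<le> crra \<theta> (v - \<beta> v) * D (F0 v) ^ (n - 1)"
  using eq unfolding sym_equilibrium_def by auto

lemma beta_c: "continuous_on {vl..vh} \<beta>"
  unfolding continuous_on_eq_continuous_within
  using beta_diff differentiable_imp_continuous_within by blast

lemma crra_pos: "0 < w \<Longrightarrow> 0 < crra \<theta> w"
  using th1 by (simp add: crra_def)
lemma crra_nonpos: "w \<le> 0 \<Longrightarrow> crra \<theta> w \<le> 0"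
  using th1 by (simp add: crra_def)
lemma crra_zero: "crra \<theta> 0 = 0"
  by (simp add: crra_def)

lemma crra_neg: "w < 0 \<Longrightarrow> crra \<theta> w < 0"
  using th1 by (simp add: crra_def)

lemma nb: "v \<in> {vl..vh} \<Longrightarrow> at v within {vl..vh} \<noteq> bot"
  using trivial_limit_within islimpt_Icc[OF vlh] by auto

lemma F0_inj: "inj_on F0 {vl..vh}"
  using F0m strict_mono_on_imp_inj_on by blast

lemma quantile_eq:
  assumes "inj_on F {lo..hi}" "x \<in> {lo..hi}" "F x = \<gamma>"
  shows "quantile_on lo hi F \<gamma> = x"
  unfolding quantile_on_def
  using assms by (intro the_equality) (auto simp: inj_on_def)

lemma F0_surj:
  assumes "\<gamma> \<in> {0..1}" shows "\<exists>x\<in>{vl..vh}. F0 x = \<gamma>"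
  using IVT'[of F0 vl \<gamma> vh] F0_0 F0_1 F0c assms vlh by auto

lemma quant:
  assumes "\<gamma> \<in> {0..1}"
  shows "quantile_on vl vh F0 \<gamma> \<in> {vl..vh}" "F0 (quantile_on vl vh F0 \<gamma>) = \<gamma>"
  using F0_surj[OF assms] quantile_eq[OF F0_inj] by auto

lemma beta_range: "x \<in> {vl..vh} \<Longrightarrow> \<beta> x \<in> {\<beta> vl..\<beta> vh}"
  using strict_mono_onD[OF beta_m, of vl x] strict_mono_onD[OF beta_m, of x vh] vlh
  by (cases "x = vl"; cases "x = vh") auto

lemma beta_inj: "inj_on \<beta> {vl..vh}"
  using beta_m strict_mono_on_imp_inj_on by blast

lemma beta_surj: "b \<in> {\<beta> vl..\<beta> vh} \<Longrightarrow> \<exists>x\<in>{vl..vh}. \<beta> x = b"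
  using IVT'[of \<beta> vl b vh] beta_c vlh by auto

lemma G_beta: assumes "x \<in> {vl..vh}" shows "bid_cdf F0 vl vh \<beta> (\<beta> x) = F0 x"
proof (cases "x = vh")
  case True then show ?thesis using F0_1 strict_mono_onD[OF beta_m, of vl vh] vlh
    by (simp add: bid_cdf_def)
next
  case False
  then have "\<beta> x < \<beta> vh" using strict_mono_onD[OF beta_m, of x vh] assms vlh by auto
  moreover have "\<not> \<beta> x < \<beta> vl" using beta_range[OF assms] by auto
  ultimately show ?thesis
    using the_inv_into_f_f[OF beta_inj assms] by (simp add: bid_cdf_def)
qed

lemma G_inj: "inj_on (bid_cdf F0 vl vh \<beta>) {\<beta> vl..\<beta> vh}"
proof (rule inj_onI)
  fix a b assume a: "a \<in> {\<beta> vl..\<beta> vh}" and b: "b \<in> {\<beta> vl..\<beta> vh}"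
    and e: "bid_cdf F0 vl vh \<beta> a = bid_cdf F0 vl vh \<beta> b"
  obtain x where x: "x\<in>{vl..vh}" "\<beta> x = a" using beta_surj[OF a] by blast
  obtain y where y: "y\<in>{vl..vh}" "\<beta> y = b" using beta_surj[OF b] by blast
  have "F0 x = F0 y" using e x y G_beta by metis
  then have "x = y" using F0_inj x y by (auto simp: inj_on_def)
  then show "a = b" using x y by simp
qed

lemma bidq:
  assumes "\<gamma> \<in> {0..1}"
  shows "bid_quantile F0 vl vh \<beta> \<gamma> = \<beta> (quantile_on vl vh F0 \<gamma>)"
  unfolding bid_quantile_def
  by (rule quantile_eq[OF G_inj]) (use quant[OF assms] beta_range G_beta in auto)

lemma beta_le: assumes "x \<in> {vl<..vh}" shows "\<beta> x \<le> x"
proof (rule ccontr)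
  assume "\<not> ?thesis"
  then have "crra \<theta> (x - \<beta> x) < 0" by (intro crra_neg) auto
  moreover have "0 < D (F0 x) ^ (n - 1)" using D_pos F0_pos F0_range assms by auto
  ultimately have "crra \<theta> (x - \<beta> x) * D (F0 x) ^ (n - 1) < 0"
    by (simp add: mult_neg_pos)
  moreover have "crra \<theta> (x - \<beta> vl) * D (F0 vl) ^ (n - 1) = 0"
    using F0_0 D0 n2 by simp
  moreover have "crra \<theta> (x - \<beta> vl) * D (F0 vl) ^ (n - 1)
      \<le> crra \<theta> (x - \<beta> x) * D (F0 x) ^ (n - 1)"
    using eqm[of x vl] assms vlh by auto
  ultimately show False by linarith
qed

lemma beta_ge: assumes "x \<in> {vl<..vh}" shows "vl \<le> \<beta> x"
proof (rule ccontr)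
  assume "\<not> ?thesis"
  then have "0 < crra \<theta> (vl - \<beta> x)" by (intro crra_pos) auto
  moreover have "0 < D (F0 x) ^ (n - 1)" using D_pos F0_pos F0_range assms by auto
  ultimately have "0 < crra \<theta> (vl - \<beta> x) * D (F0 x) ^ (n - 1)"
    by simp
  moreover have "crra \<theta> (vl - \<beta> vl) * D (F0 vl) ^ (n - 1) = 0"
    using F0_0 D0 n2 by simp
  moreover have "crra \<theta> (vl - \<beta> x) * D (F0 x) ^ (n - 1)
      \<le> crra \<theta> (vl - \<beta> vl) * D (F0 vl) ^ (n - 1)"
    using eqm[of vl x] assms vlh by auto
  ultimately show False by linarith
qed

lemma beta_vl: "\<beta> vl = vl"
proof -
  have "\<beta> vl \<le> vl"
  proof (rule ccontr)
    assume a: "\<not> ?thesis"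
    define x where "x = min vh (\<beta> vl)"
    have x: "x \<in> {vl<..vh}" using a vlh by (auto simp: x_def)
    have "\<beta> vl < \<beta> x" using strict_mono_onD[OF beta_m, of vl x] x by auto
    also have "\<dots> \<le> x" using beta_le[OF x] .
    also have "\<dots> \<le> \<beta> vl" by (simp add: x_def)
    finally show False by simp
  qed
  moreover have "vl \<le> \<beta> vl"
  proof (rule ccontr)
    assume a: "\<not> ?thesis"
    obtain d where d: "d > 0" "\<forall>x'\<in>{vl..vh}. dist x' vl < d \<longrightarrow> dist (\<beta> x') (\<beta> vl) < vl - \<beta> vl"
      using cont_pt[OF beta_c, of vl "vl - \<beta> vl"] vlh a by auto
    define x where "x = min vh (vl + d/2)"
    have x: "x \<in> {vl<..vh}" using d vlh by (auto simp: x_def)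
    have "dist x vl < d" using d x by (auto simp: x_def dist_real_def)
    then have "dist (\<beta> x) (\<beta> vl) < vl - \<beta> vl" using d x by auto
    then have "\<beta> x < vl" by (auto simp: dist_real_def)
    then show False using beta_ge[OF x] by simp
  qed
  ultimately show ?thesis by simp
qed

lemma w_pos: assumes v: "v \<in> {vl<..vh}" shows "\<beta> v < v"
proof (rule ccontr)
  assume "\<not> ?thesis"
  then have e: "\<beta> v = v" using beta_le[OF v] by simp
  define x where "x = (vl + v) / 2"
  have x: "x \<in> {vl<..vh}" "x < v" using v by (auto simp: x_def)
  have "\<beta> x < \<beta> v" using strict_mono_onD[OF beta_m, of x v] x v by auto
  then have "0 < crra \<theta> (v - \<beta> x)" using e by (intro crra_pos) auto
  moreover have "0 < D (F0 x) ^ (n - 1)" using D_pos F0_pos F0_range x by auto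
  ultimately have "0 < crra \<theta> (v - \<beta> x) * D (F0 x) ^ (n - 1)" by simp
  moreover have "crra \<theta> (v - \<beta> x) * D (F0 x) ^ (n - 1)
      \<le> crra \<theta> (v - \<beta> v) * D (F0 v) ^ (n - 1)"
    using eqm[of v x] x v by auto
  ultimately show False using e crra_zero by simp
qed

lemma beta_deriv:
  assumes v: "v \<in> {vl..vh}"
  shows "(\<beta> has_real_derivative f0 v / g (\<beta> v)) (at v within {vl..vh})"
proof -
  obtain d where d: "(\<beta> has_real_derivative d) (at v within {vl..vh})"
    using beta_diff[OF v] real_differentiable_def by blast
  have "(bid_cdf F0 vl vh \<beta> has_real_derivative g (\<beta> v)) (at (\<beta> v) within \<beta> ` {vl..vh})"
  proof (rule DERIV_subset)
    show "(bid_cdf F0 vl vh \<beta> has_real_derivative g (\<beta> v)) (at (\<beta> v) within {\<beta> vl..\<beta> vh})"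
      using gd beta_range[OF v] by blast
    show "\<beta> ` {vl..vh} \<subseteq> {\<beta> vl..\<beta> vh}" using beta_range by blast
  qed
  from DERIV_image_chain[OF this d]
  have "(bid_cdf F0 vl vh \<beta> \<circ> \<beta> has_real_derivative g (\<beta> v) * d) (at v within {vl..vh})" .
  then have "(F0 has_real_derivative g (\<beta> v) * d) (at v within {vl..vh})"
    by (rule has_field_derivative_transform_within[where d=1]) (use v G_beta in auto)
  then have "g (\<beta> v) * d = f0 v"
    using has_field_derivative_unique F0d[OF v] nb[OF v] by blast
  then have "d = f0 v / g (\<beta> v)" using gpos beta_range[OF v]
    by (metis less_irrefl nonzero_eq_divide_eq mult.commute)
  then show ?thesis using d by simp
qed

lemma foc:
  assumes v: "v \<in> {vl<..<vh}"
  shows "(1 - \<theta>) * D (F0 v) = (v - \<beta> v) * (real n - 1) * Dp (F0 v) * g (\<beta> v)"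
proof -
  define e where "e = n - 1"
  define w0 where "w0 = v - \<beta> v"
  define d where "d = f0 v / g (\<beta> v)"
  define Dv where "Dv = D (F0 v)"
  define gb where "gb = g (\<beta> v)"
  have vI: "v \<in> {vl..vh}" using v by auto
  have w0: "0 < w0" using w_pos[of v] v by (auto simp: w0_def)
  have gb: "0 < gb" using gpos beta_range[OF vI] by (auto simp: gb_def)
  have f0v: "0 < f0 v" using f0pos vI by auto
  have Fv: "F0 v \<in> {0<..<1}" using F0_pos[of v] F0_lt1[of v] v by auto
  have Dv: "0 < Dv" using D_pos[of "F0 v"] Fv by (auto simp: Dv_def)
  have e1: "1 \<le> e" using n2 by (simp add: e_def)
  have dB: "(\<beta> has_real_derivative d) (at v)"
    using beta_deriv[OF vI] at_within_Icc_at[of vl v vh] v by (simp add: d_def)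
  have dF: "(F0 has_real_derivative f0 v) (at v)"
    using F0d[OF vI] at_within_Icc_at[of vl v vh] v by simp
  have dD: "(D has_real_derivative Dp (F0 v)) (at (F0 v))"
  proof -
    have F: "F0 v \<in> {0..1}" using Fv by auto
    show ?thesis using Dd[rule_format, OF F] at_within_Icc_at[of 0 "F0 v" 1] Fv by simp
  qed
  have dDF: "((\<lambda>x. D (F0 x)) has_real_derivative Dp (F0 v) * f0 v) (at v)"
    using DERIV_chain2[OF dD dF] .
  have dW: "((\<lambda>x. v - \<beta> x) has_real_derivative 0 - d) (at v)"
    using DERIV_diff[OF DERIV_const dB] .
  have dP1: "((\<lambda>x. (v - \<beta> x) powr (1 - \<theta>)) has_real_derivative
      (1 - \<theta>) * w0 powr ((1 - \<theta>) - of_nat 1) * (0 - d)) (at v)"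
    using DERIV_fun_powr[OF dW, of "1 - \<theta>"] w0 by (simp add: w0_def)
  have dP2: "((\<lambda>x. D (F0 x) ^ e) has_real_derivative of_nat e * (Dp (F0 v) * f0 v * Dv ^ (e - Suc 0))) (at v)"
    using DERIV_power[OF dDF, of e] by (simp add: Dv_def)
  define L where "L = (1 - \<theta>) * w0 powr ((1 - \<theta>) - of_nat 1) * (0 - d) / (1 - \<theta>) * Dv ^ e
     + of_nat e * (Dp (F0 v) * f0 v * Dv ^ (e - Suc 0)) * (w0 powr (1 - \<theta>) / (1 - \<theta>))"
  have dP: "((\<lambda>x. (v - \<beta> x) powr (1 - \<theta>) / (1 - \<theta>) * D (F0 x) ^ e) has_real_derivative L) (at v)"
    unfolding L_def using DERIV_mult[OF DERIV_cdivide[OF dP1] dP2] by (simp only: Dv_def w0_def)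
  obtain d1 where d1: "d1 > 0" "\<forall>y\<in>{vl..vh}. dist y v < d1 \<longrightarrow> dist (\<beta> y) (\<beta> v) < w0"
    using cont_pt[OF beta_c vI w0] by auto
  define d0 where "d0 = min d1 (min (v - vl) (vh - v))"
  have d0: "0 < d0" using d1 v by (auto simp: d0_def)
  have "L = 0"
  proof (rule DERIV_local_max[OF dP d0], intro allI impI)
    fix y assume y: "\<bar>v - y\<bar> < d0"
    have yI: "y \<in> {vl..vh}" using y by (auto simp: d0_def)
    have "dist y v < d1" using y by (auto simp: d0_def dist_real_def)
    then have "\<bar>\<beta> y - \<beta> v\<bar> < w0" using d1 yI by (auto simp: dist_real_def)
    then have wy: "0 \<le> v - \<beta> y" by (auto simp: w0_def)
    have "crra \<theta> (v - \<beta> y) * D (F0 y) ^ (n - 1) \<le> crra \<theta> (v - \<beta> v) * D (F0 v) ^ (n - 1)"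
      using eqm[OF vI yI] .
    then show "(v - \<beta> y) powr (1 - \<theta>) / (1 - \<theta>) * D (F0 y) ^ e
        \<le> (v - \<beta> v) powr (1 - \<theta>) / (1 - \<theta>) * D (F0 v) ^ e"
      using wy w0 by (simp add: crra_def e_def w0_def)
  qed
  define p where "p = w0 powr (- \<theta>)"
  define q where "q = Dv ^ (e - Suc 0)"
  define r where "r = inverse (1 - \<theta>)"
  have p: "0 < p" using w0 by (simp add: p_def)
  have q: "0 < q" using Dv by (simp add: q_def)
  have pw: "w0 powr (1 - \<theta>) = w0 * p"
    using w0 powr_add[of w0 1 "-\<theta>"] by (simp add: p_def)
  have pw2: "w0 powr ((1 - \<theta>) - of_nat 1) = p" by (simp add: p_def)
  have De: "Dv ^ e = Dv * q" using e1 by (simp add: q_def power_eq_if)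
  have th: "1 - \<theta> > 0" using th1 by simp
  have t1: "(1 - \<theta>) * p * (0 - d) / (1 - \<theta>) = - (p * d)" using th by simp
  have t2: "w0 * p / (1 - \<theta>) = w0 * p * r" by (simp add: r_def divide_inverse)
  have "L = - (p * d) * (Dv * q) + of_nat e * (Dp (F0 v) * f0 v * q) * (w0 * p * r)"
    unfolding L_def pw pw2 De t1 t2 q_def[symmetric] by simp
  also have "\<dots> = p * q * (real e * Dp (F0 v) * f0 v * w0 * r - d * Dv)"
    by (simp add: algebra_simps)
  finally have "real e * Dp (F0 v) * f0 v * w0 * r - d * Dv = 0"
    using \<open>L = 0\<close> p q by simp
  then have "real e * Dp (F0 v) * f0 v * w0 * r * (1 - \<theta>) = d * Dv * (1 - \<theta>)" by simp
  moreover have "r * (1 - \<theta>) = 1" using th by (simp add: r_def)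
  ultimately have E: "real e * Dp (F0 v) * f0 v * w0 = d * Dv * (1 - \<theta>)"
    by (metis mult.assoc mult.right_neutral)
  have dg: "d * gb = f0 v" using gb by (simp add: d_def gb_def)
  have "f0 v * (Dv * (1 - \<theta>)) = f0 v * (real e * Dp (F0 v) * w0 * gb)"
  proof -
    have "f0 v * (Dv * (1 - \<theta>)) = gb * (d * Dv * (1 - \<theta>))" using dg by (simp add: algebra_simps)
    also have "\<dots> = gb * (real e * Dp (F0 v) * f0 v * w0)" using E by simp
    finally show ?thesis by (simp add: algebra_simps)
  qed
  then have "Dv * (1 - \<theta>) = real e * Dp (F0 v) * w0 * gb" using f0v by simp
  moreover have "real e = real n - 1" using n2 by (simp add: e_def of_nat_diff)
  ultimately show ?thesis by (simp add: Dv_def w0_def gb_def algebra_simps)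
qed

lemma Dc: "continuous_on {0..1} D"
  unfolding continuous_on_eq_continuous_within using Dd DERIV_continuous by blast

lemma DF_c: "continuous_on {vl..vh} (\<lambda>x. D (F0 x))"
  by (rule continuous_on_compose2[OF Dc F0c]) (use F0_range in auto)
lemma DpF_c: "continuous_on {vl..vh} (\<lambda>x. Dp (F0 x))"
  by (rule continuous_on_compose2[OF Dpc F0c]) (use F0_range in auto)
lemma gb_c: "continuous_on {vl..vh} (\<lambda>x. g (\<beta> x))"
  by (rule continuous_on_compose2[OF gc beta_c]) (use beta_range in auto)

lemma R_all:
  assumes v: "v \<in> {vl..vh}"
  shows "(1 - \<theta>) * D (F0 v) = (v - \<beta> v) * (real n - 1) * Dp (F0 v) * g (\<beta> v)"
proof -
  let ?f = "\<lambda>v. (1 - \<theta>) * D (F0 v)"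
  let ?h = "\<lambda>v. (v - \<beta> v) * (real n - 1) * Dp (F0 v) * g (\<beta> v)"
  have cf: "continuous_on {vl..vh} ?f" by (intro continuous_intros DF_c)
  have ch: "continuous_on {vl..vh} ?h" by (intro continuous_intros DpF_c gb_c beta_c)
  consider "v = vl" | "v \<in> {vl<..<vh}" | "v = vh" using v by fastforce
  then show ?thesis
  proof cases
    case 1 then show ?thesis using beta_vl F0_0 D0 by simp
  next
    case 2 then show ?thesis using foc by blast
  next
    case 3
    show ?thesis
    proof (rule ccontr)
      assume ne: "\<not> ?thesis"
      define e where "e = \<bar>?f vh - ?h vh\<bar> / 2"
      have e: "0 < e" using ne 3 by (auto simp: e_def)
      have vhI: "vh \<in> {vl..vh}" using vlh by auto
      obtain d1 where d1: "d1 > 0" "\<forall>y\<in>{vl..vh}. dist y vh < d1 \<longrightarrow> dist (?f y) (?f vh) < e"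
        using cont_pt[OF cf vhI e] by blast
      obtain d2 where d2: "d2 > 0" "\<forall>y\<in>{vl..vh}. dist y vh < d2 \<longrightarrow> dist (?h y) (?h vh) < e"
        using cont_pt[OF ch vhI e] by blast
      define y where "y = vh - min (vh - vl) (min d1 d2) / 2"
      define m where "m = min (vh - vl) (min d1 d2)"
      have m: "0 < m" "m \<le> vh - vl" "m \<le> d1" "m \<le> d2" using d1 d2 vlh by (auto simp: m_def)
      have y: "y \<in> {vl<..<vh}" using m by (auto simp: y_def m_def[symmetric])
      have "dist y vh < d1" "dist y vh < d2" using m by (auto simp: y_def m_def[symmetric] dist_real_def)
      then have "dist (?f y) (?f vh) < e" "dist (?h y) (?h vh) < e" using d1 d2 y by auto
      moreover have "?f y = ?h y" using foc[OF y] .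
      ultimately have "\<bar>?f vh - ?h vh\<bar> < 2 * e" by (auto simp: dist_real_def)
      then show False by (simp add: e_def)
    qed
  qed
qed

lemma Dp_pos: assumes "\<gamma> \<in> {0..1}" shows "0 < Dp \<gamma>"
proof (cases "\<gamma> = 0")
  case True then show ?thesis using Dp0 by simp
next
  case False
  define v where "v = quantile_on vl vh F0 \<gamma>"
  have v: "v \<in> {vl..vh}" "F0 v = \<gamma>" using quant[OF assms] by (auto simp: v_def)
  have "v \<noteq> vl" using v F0_0 False by auto
  then have v2: "v \<in> {vl<..vh}" using v by auto
  have "0 < (1 - \<theta>) * D (F0 v)" using D_pos[of \<gamma>] v assms False th1 by auto
  then have pos: "0 < (v - \<beta> v) * (real n - 1) * Dp (F0 v) * g (\<beta> v)" using R_all[OF v(1)] by simp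
  have "0 < v - \<beta> v" using w_pos[OF v2] by simp
  moreover have "0 < real n - 1" using n2 by simp
  moreover have "0 < g (\<beta> v)" using gpos beta_range[OF v(1)] by auto
  ultimately show ?thesis using pos v(2)
    by (metis mult_pos_pos not_le mult_nonpos_nonneg mult_nonneg_nonpos less_le_not_le zero_less_mult_iff)
qed

lemma g_vl: "(real n - 1) * g vl = f0 vl * (real n - \<theta>)"
proof -
  let ?F = "at vl within {vl..vh}"
  have vlI: "vl \<in> {vl..vh}" using vlh by auto
  have nbF: "?F \<noteq> bot" using nb[OF vlI] .
  have dD0: "(D has_real_derivative Dp 0) (at (F0 vl) within F0 ` {vl..vh})"
  proof -
    have "(D has_real_derivative Dp 0) (at 0 within {0..1})" using Dd by simp
    moreover have "F0 ` {vl..vh} \<subseteq> {0..1}" using F0_range by blast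
    ultimately show ?thesis using F0_0 DERIV_subset by simp
  qed
  have dDF: "((\<lambda>y. D (F0 y)) has_real_derivative Dp 0 * f0 vl) ?F"
    using DERIV_image_chain[OF dD0 F0d[OF vlI]] by (simp add: o_def)
  have T1: "((\<lambda>y. D (F0 y) / (y - vl)) \<longlongrightarrow> Dp 0 * f0 vl) ?F"
    using dDF unfolding has_field_derivative_iff using F0_0 D0 by simp
  have T2: "((\<lambda>y. (\<beta> y - \<beta> vl) / (y - vl)) \<longlongrightarrow> f0 vl / g (\<beta> vl)) ?F"
    using beta_deriv[OF vlI] unfolding has_field_derivative_iff .
  have T3: "((\<lambda>y. Dp (F0 y)) \<longlongrightarrow> Dp (F0 vl)) ?F"
    using DpF_c vlI continuous_on_eq_continuous_within continuous_within by blast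
  have T4: "((\<lambda>y. g (\<beta> y)) \<longlongrightarrow> g (\<beta> vl)) ?F"
    using gb_c vlI continuous_on_eq_continuous_within continuous_within by blast
  have L1: "((\<lambda>y. (1 - \<theta>) * (D (F0 y) / (y - vl))) \<longlongrightarrow> (1 - \<theta>) * (Dp 0 * f0 vl)) ?F"
    by (intro tendsto_intros T1)
  have L2: "((\<lambda>y. (1 - (\<beta> y - \<beta> vl) / (y - vl)) * (real n - 1) * Dp (F0 y) * g (\<beta> y))
      \<longlongrightarrow> (1 - f0 vl / g (\<beta> vl)) * (real n - 1) * Dp (F0 vl) * g (\<beta> vl)) ?F"
    by (intro tendsto_intros T2 T3 T4)
  have ev: "eventually (\<lambda>y. (1 - \<theta>) * (D (F0 y) / (y - vl)) =
      (1 - (\<beta> y - \<beta> vl) / (y - vl)) * (real n - 1) * Dp (F0 y) * g (\<beta> y)) ?F"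
    unfolding eventually_at
  proof (intro exI[of _ 1] conjI ballI impI)
    fix y assume y: "y \<in> {vl..vh}" "y \<noteq> vl \<and> dist y vl < 1"
    then have yv: "y - vl \<noteq> 0" by auto
    have R: "(1 - \<theta>) * D (F0 y) = (y - \<beta> y) * (real n - 1) * Dp (F0 y) * g (\<beta> y)"
      using R_all[OF y(1)] .
    have X: "1 - (\<beta> y - \<beta> vl) / (y - vl) = (y - \<beta> y) / (y - vl)"
      using yv beta_vl by (simp add: field_simps)
    have "(1 - \<theta>) * (D (F0 y) / (y - vl)) = ((1 - \<theta>) * D (F0 y)) / (y - vl)" by simp
    also have "\<dots> = ((y - \<beta> y) * (real n - 1) * Dp (F0 y) * g (\<beta> y)) / (y - vl)" using R by simp
    also have "\<dots> = ((y - \<beta> y) / (y - vl)) * (real n - 1) * Dp (F0 y) * g (\<beta> y)" by simp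
    finally show "(1 - \<theta>) * (D (F0 y) / (y - vl)) =
      (1 - (\<beta> y - \<beta> vl) / (y - vl)) * (real n - 1) * Dp (F0 y) * g (\<beta> y)"
      unfolding X .
  qed simp
  have "(1 - \<theta>) * (Dp 0 * f0 vl) = (1 - f0 vl / g (\<beta> vl)) * (real n - 1) * Dp (F0 vl) * g (\<beta> vl)"
    using tendsto_unique[OF nbF L1 tendsto_cong[THEN iffD2, OF ev L2]] .
  then have E0: "(1 - \<theta>) * (Dp 0 * f0 vl) = (1 - f0 vl / g vl) * (real n - 1) * Dp 0 * g vl"
    using beta_vl F0_0 by simp
  have gvl: "0 < g vl" using gpos beta_range[OF vlI] beta_vl by auto
  have "(1 - f0 vl / g vl) * (real n - 1) * Dp 0 * g vl = (g vl - f0 vl) * (real n - 1) * Dp 0"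
    using gvl by (simp add: field_simps)
  with E0 have E: "(1 - \<theta>) * (Dp 0 * f0 vl) = (g vl - f0 vl) * (real n - 1) * Dp 0" by simp
  have "Dp 0 * ((1 - \<theta>) * f0 vl) = Dp 0 * ((g vl - f0 vl) * (real n - 1))"
    using E by (simp add: algebra_simps)
  then have "(1 - \<theta>) * f0 vl = (g vl - f0 vl) * (real n - 1)" using Dp0 by simp
  then show ?thesis by (simp add: algebra_simps)
qed

lemma wq:
  assumes \<gamma>: "\<gamma> \<in> {0..1}"
  shows "quantile_on vl vh F0 \<gamma> - bid_quantile F0 vl vh \<beta> \<gamma>
     = (1 - \<theta>) * (D \<gamma> / Dp \<gamma>) / ((real n - 1) * g (bid_quantile F0 vl vh \<beta> \<gamma>))"
proof -
  define v where "v = quantile_on vl vh F0 \<gamma>"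
  have v: "v \<in> {vl..vh}" "F0 v = \<gamma>" using quant[OF \<gamma>] by (auto simp: v_def)
  have b: "bid_quantile F0 vl vh \<beta> \<gamma> = \<beta> v" using bidq[OF \<gamma>] by (simp add: v_def)
  define Ac where "Ac = (real n - 1) * g (\<beta> v)"
  have R: "(1 - \<theta>) * D \<gamma> = (v - \<beta> v) * (Ac * Dp \<gamma>)"
    using R_all[OF v(1)] v(2) by (simp add: mult_ac Ac_def)
  have A: "0 < Ac" using n2 gpos beta_range[OF v(1)] by (auto simp: Ac_def)
  have P: "0 < Dp \<gamma>" using Dp_pos[OF \<gamma>] .
  have "(1 - \<theta>) * (D \<gamma> / Dp \<gamma>) / ((real n - 1) * g (\<beta> v))
      = ((1 - \<theta>) * D \<gamma>) / (Ac * Dp \<gamma>)" by (simp add: Ac_def)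
  also have "\<dots> = (v - \<beta> v) * (Ac * Dp \<gamma>) / (Ac * Dp \<gamma>)" unfolding R ..
  also have "\<dots> = v - \<beta> v" using A P by simp
  finally show ?thesis using b by (simp add: v_def)
qed

lemma vq:
  assumes \<gamma>: "\<gamma> \<in> {0..1}"
  shows "quantile_on vl vh F0 \<gamma> = bid_quantile F0 vl vh \<beta> \<gamma>
     + (1 - \<theta>) * (D \<gamma> / Dp \<gamma>) / ((real n - 1) * g (bid_quantile F0 vl vh \<beta> \<gamma>))"
  using wq[OF \<gamma>] by simp

lemma ratio:
  assumes z: "z \<in> {vl<..vh}"
  shows "f0 z / g (\<beta> z) = f0 z * (z - \<beta> z) * Dp (F0 z) / ((1 - \<theta>) * D (F0 z)) * (real n - 1)"
proof -
  have zI: "z \<in> {vl..vh}" using z by auto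
  define X where "X = (1 - \<theta>) * D (F0 z)"
  define w where "w = z - \<beta> z"
  define gz where "gz = g (\<beta> z)"
  have R: "X = w * (real n - 1) * Dp (F0 z) * gz"
    using R_all[OF zI] by (simp add: X_def w_def gz_def)
  have w: "0 < w" using w_pos[OF z] by (simp add: w_def)
  have gz: "0 < gz" using gpos beta_range[OF zI] by (auto simp: gz_def)
  have Dp: "0 < Dp (F0 z)" using Dp_pos F0_range[OF zI] by auto
  have nn: "0 < real n - 1" using n2 by simp
  have "f0 z * w * Dp (F0 z) / X * (real n - 1) = f0 z * (w * (real n - 1) * Dp (F0 z)) / X"
    by (simp add: mult_ac)
  also have "\<dots> = f0 z * (w * (real n - 1) * Dp (F0 z)) / (w * (real n - 1) * Dp (F0 z) * gz)"
    using R by simp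
  also have "\<dots> = f0 z / gz" using w nn Dp by simp
  finally show ?thesis by (simp add: X_def w_def gz_def)
qed

end

theorem mainTheorem6:
  fixes vl vh \<theta> :: real and n1 n2 :: nat
    and F0 f0 Fs fs D Dp :: "real \<Rightarrow> real"
    and \<Gamma> :: "(real \<Rightarrow> real) set"
    and \<beta> g :: "nat \<Rightarrow> real \<Rightarrow> real"
  assumes vlh: "vl < vh"
    and n12: "2 \<le> n1" "n1 < n2"
    and theta: "0 \<le> \<theta>" "\<theta> < 1"
    and F0: "C1_cdf_on vl vh F0 f0" "\<forall>v\<in>{vl..vh}. 0 < f0 v"
    and Fs: "C1_cdf_on vl vh Fs fs" "\<forall>v\<in>{vl..vh}. 0 < fs v"
    and Gamma: "F0 \<in> \<Gamma>" "Fs \<in> \<Gamma>"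
      "\<forall>F\<in>\<Gamma>. \<exists>f. C1_cdf_on vl vh F f"
      "\<forall>F\<in>\<Gamma>. \<forall>v\<in>{vl..vh}. Fs v \<le> F v"
      "\<forall>F\<in>\<Gamma>. \<forall>F'\<in>\<Gamma>. \<forall>t\<in>{0..1}. (\<lambda>v. t * F v + (1 - t) * F' v) \<in> \<Gamma>"
    and D_def: "D = (\<lambda>\<gamma>. Fs (the_inv_into {vl..vh} F0 \<gamma>))"
    and D: "\<forall>\<gamma>\<in>{0..1}. (D has_real_derivative Dp \<gamma>) (at \<gamma> within {0..1})"
      "continuous_on {0..1} Dp" "strict_mono_on {0..1} D"
      "D 0 = 0" "D 1 = 1" "0 < Dp 0"
    and eq: "\<forall>n\<in>{n1, n2}. sym_equilibrium \<theta> vl vh F0 D n (\<beta> n)"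
    and dens: "\<forall>n\<in>{n1, n2}. \<forall>b\<in>{\<beta> n vl..\<beta> n vh}.
                 (bid_cdf F0 vl vh (\<beta> n) has_real_derivative g n b) (at b within {\<beta> n vl..\<beta> n vh})"
      "\<forall>n\<in>{n1, n2}. \<forall>b\<in>{\<beta> n vl..\<beta> n vh}. 0 < g n b"
      "\<forall>n\<in>{n1, n2}. continuous_on {\<beta> n vl..\<beta> n vh} (g n)"
  shows "\<theta> = (real n2 * (real n1 - 1) * g n1 (\<beta> n1 vl) - real n1 * (real n2 - 1) * g n2 (\<beta> n2 vl))
              / ((real n1 - 1) * g n1 (\<beta> n1 vl) - (real n2 - 1) * g n2 (\<beta> n2 vl))
    \<and> (\<forall>\<gamma>\<in>{0..1}. D \<gamma> / Dp \<gamma> =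
          (bid_quantile F0 vl vh (\<beta> n2) \<gamma> - bid_quantile F0 vl vh (\<beta> n1) \<gamma>) / (1 - \<theta>)
          * inverse (1 / ((real n1 - 1) * g n1 (bid_quantile F0 vl vh (\<beta> n1) \<gamma>))
                     - 1 / ((real n2 - 1) * g n2 (bid_quantile F0 vl vh (\<beta> n2) \<gamma>))))
    \<and> (\<forall>\<gamma>\<in>{0<..1}. D \<gamma> = exp (- integral {\<gamma>..1} (\<lambda>t. 1 / (D t / Dp t))))
    \<and> (\<forall>\<gamma>\<in>{0..1}. \<forall>n\<in>{n1, n2}.
          quantile_on vl vh F0 \<gamma> = bid_quantile F0 vl vh (\<beta> n) \<gamma>
             + (1 - \<theta>) * (D \<gamma> / Dp \<gamma>) / ((real n - 1) * g n (bid_quantile F0 vl vh (\<beta> n) \<gamma>)))"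
proof -
  interpret e1: eqm \<theta> vl vh n1 F0 f0 D Dp "\<beta> n1" "g n1"
    using vlh n12 theta F0 D eq dens by unfold_locales auto
  interpret e2: eqm \<theta> vl vh n2 F0 f0 D Dp "\<beta> n2" "g n2"
    using vlh n12 theta F0 D eq dens by unfold_locales auto
  have vlI: "vl \<in> {vl..vh}" using vlh by auto
  have f0vl: "0 < f0 vl" using F0(2) vlI by auto
  have nn: "real n1 < real n2" using n12 by simp
  have P1: "\<theta> = (real n2 * (real n1 - 1) * g n1 (\<beta> n1 vl) - real n1 * (real n2 - 1) * g n2 (\<beta> n2 vl))
              / ((real n1 - 1) * g n1 (\<beta> n1 vl) - (real n2 - 1) * g n2 (\<beta> n2 vl))"
  proof -
    have A1: "(real n1 - 1) * g n1 vl = f0 vl * (real n1 - \<theta>)" using e1.g_vl .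
    have A2: "(real n2 - 1) * g n2 vl = f0 vl * (real n2 - \<theta>)" using e2.g_vl .
    have num: "real n2 * (real n1 - 1) * g n1 vl - real n1 * (real n2 - 1) * g n2 vl
        = \<theta> * (f0 vl * (real n1 - real n2))"
    proof -
      have "real n2 * (real n1 - 1) * g n1 vl - real n1 * (real n2 - 1) * g n2 vl
          = real n2 * ((real n1 - 1) * g n1 vl) - real n1 * ((real n2 - 1) * g n2 vl)"
        by (simp add: mult.assoc)
      also have "\<dots> = \<theta> * (f0 vl * (real n1 - real n2))" unfolding A1 A2 by (simp add: algebra_simps)
      finally show ?thesis .
    qed
    have den: "(real n1 - 1) * g n1 vl - (real n2 - 1) * g n2 vl = f0 vl * (real n1 - real n2)"
      unfolding A1 A2 by (simp add: algebra_simps)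
    have "f0 vl * (real n1 - real n2) \<noteq> 0" using f0vl nn by simp
    then show ?thesis using num den e1.beta_vl e2.beta_vl by simp
  qed
  have dc: "continuous_on {vl..vh} (\<lambda>x. \<beta> n2 x - \<beta> n1 x)"
      by (intro continuous_intros e1.beta_c e2.beta_c)
  have d0: "\<beta> n2 vl - \<beta> n1 vl = 0" using e1.beta_vl e2.beta_vl by simp
  have der: "\<And>z. z \<in> {vl..vh} \<Longrightarrow> \<beta> n2 z - \<beta> n1 z = 0 \<Longrightarrow> ((\<lambda>x. \<beta> n2 x - \<beta> n1 x) has_real_derivative
        f0 z / g n2 (\<beta> n2 z) - f0 z / g n1 (\<beta> n1 z)) (at z within {vl..vh})
      \<and> 0 < f0 z / g n2 (\<beta> n2 z) - f0 z / g n1 (\<beta> n1 z)"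
  proof -
    fix z assume z: "z \<in> {vl..vh}" and z0: "\<beta> n2 z - \<beta> n1 z = 0"
    show "((\<lambda>x. \<beta> n2 x - \<beta> n1 x) has_real_derivative
        f0 z / g n2 (\<beta> n2 z) - f0 z / g n1 (\<beta> n1 z)) (at z within {vl..vh})
      \<and> 0 < f0 z / g n2 (\<beta> n2 z) - f0 z / g n1 (\<beta> n1 z)"
    proof
      show "((\<lambda>x. \<beta> n2 x - \<beta> n1 x) has_real_derivative
        f0 z / g n2 (\<beta> n2 z) - f0 z / g n1 (\<beta> n1 z)) (at z within {vl..vh})"
        using DERIV_diff[OF e2.beta_deriv[OF z] e1.beta_deriv[OF z]] .
      show "0 < f0 z / g n2 (\<beta> n2 z) - f0 z / g n1 (\<beta> n1 z)"
      proof (cases "z = vl")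
        case True
        have g1: "0 < g n1 vl" using e1.gpos e1.beta_range[OF vlI] e1.beta_vl by auto
        have g2: "0 < g n2 vl" using e2.gpos e2.beta_range[OF vlI] e2.beta_vl by auto
        have t1: "0 < real n1 - \<theta>" "0 < real n1 - 1" using n12 theta by auto
        have t2: "0 < real n2 - \<theta>" "0 < real n2 - 1" using n12 theta by auto
        have r1: "f0 vl / g n1 vl = (real n1 - 1) / (real n1 - \<theta>)"
          using e1.g_vl g1 t1 by (simp add: field_simps)
        have r2: "f0 vl / g n2 vl = (real n2 - 1) / (real n2 - \<theta>)"
          using e2.g_vl g2 t2 by (simp add: field_simps)
        have "(real n2 - 1) / (real n2 - \<theta>) - (real n1 - 1) / (real n1 - \<theta>)
            = ((real n2 - real n1) * (1 - \<theta>)) / ((real n2 - \<theta>) * (real n1 - \<theta>))"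
          using t1 t2 by (simp add: field_simps)
        also have "\<dots> > 0" using t1 t2 nn theta by simp
        finally show ?thesis using True r1 r2 e1.beta_vl e2.beta_vl by simp
      next
        case False
        then have z2: "z \<in> {vl<..vh}" using z by auto
        define K where "K = f0 z * (z - \<beta> n1 z) * Dp (F0 z) / ((1 - \<theta>) * D (F0 z))"
        have same: "\<beta> n2 z = \<beta> n1 z" using z0 by simp
        have q1: "f0 z / g n1 (\<beta> n1 z) = K * (real n1 - 1)" using e1.ratio[OF z2] by (simp add: K_def)
        have q2: "f0 z / g n2 (\<beta> n2 z) = K * (real n2 - 1)" using e2.ratio[OF z2] same by (simp add: K_def)
        have K: "0 < K" unfolding K_def
          using F0(2) z e1.w_pos[OF z2] e1.Dp_pos e1.F0_range[OF z] e1.D_pos[of "F0 z"]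
            e1.F0_pos[OF z2] theta
          by (intro divide_pos_pos mult_pos_pos) auto
        show ?thesis unfolding q1 q2 using K nn by (simp add: algebra_simps)
      qed
    qed
  qed
  have dpos: "\<And>x. x \<in> {vl<..vh} \<Longrightarrow> 0 < \<beta> n2 x - \<beta> n1 x"
    using pos_after_zero[where \<delta> = "\<lambda>x. \<beta> n2 x - \<beta> n1 x"
      and d = "\<lambda>x. f0 x / g n2 (\<beta> n2 x) - f0 x / g n1 (\<beta> n1 x)", OF vlh dc d0 der] by blast
  have P2: "\<forall>\<gamma>\<in>{0..1}. D \<gamma> / Dp \<gamma> =
          (bid_quantile F0 vl vh (\<beta> n2) \<gamma> - bid_quantile F0 vl vh (\<beta> n1) \<gamma>) / (1 - \<theta>)
          * inverse (1 / ((real n1 - 1) * g n1 (bid_quantile F0 vl vh (\<beta> n1) \<gamma>))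
                     - 1 / ((real n2 - 1) * g n2 (bid_quantile F0 vl vh (\<beta> n2) \<gamma>)))"
  proof
    fix \<gamma> :: real assume \<gamma>: "\<gamma> \<in> {0..1}"
    define v where "v = quantile_on vl vh F0 \<gamma>"
    have v: "v \<in> {vl..vh}" "F0 v = \<gamma>" using e1.quant[OF \<gamma>] by (auto simp: v_def)
    have b1: "bid_quantile F0 vl vh (\<beta> n1) \<gamma> = \<beta> n1 v" using e1.bidq[OF \<gamma>] by (simp add: v_def)
    have b2: "bid_quantile F0 vl vh (\<beta> n2) \<gamma> = \<beta> n2 v" using e2.bidq[OF \<gamma>] by (simp add: v_def)
    show "D \<gamma> / Dp \<gamma> =
          (bid_quantile F0 vl vh (\<beta> n2) \<gamma> - bid_quantile F0 vl vh (\<beta> n1) \<gamma>) / (1 - \<theta>)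
          * inverse (1 / ((real n1 - 1) * g n1 (bid_quantile F0 vl vh (\<beta> n1) \<gamma>))
                     - 1 / ((real n2 - 1) * g n2 (bid_quantile F0 vl vh (\<beta> n2) \<gamma>)))"
    proof (cases "\<gamma> = 0")
      case True
      then have "v = vl" using v e1.F0_inj e1.F0_0 vlI by (auto simp: inj_on_def)
      then show ?thesis using True D(4) b1 b2 e1.beta_vl e2.beta_vl by simp
    next
      case False
      then have vv: "v \<in> {vl<..vh}" using v e1.F0_0 by (cases "v = vl") auto
      define H where "H = D \<gamma> / Dp \<gamma>"
      define A1 where "A1 = (real n1 - 1) * g n1 (\<beta> n1 v)"
      define A2 where "A2 = (real n2 - 1) * g n2 (\<beta> n2 v)"
      have A1: "0 < A1" using n12 e1.gpos e1.beta_range[OF v(1)] by (auto simp: A1_def)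
      have A2: "0 < A2" using n12 e2.gpos e2.beta_range[OF v(1)] by (auto simp: A2_def)
      have H: "0 < H" using e1.D_pos[of \<gamma>] e1.Dp_pos[OF \<gamma>] \<gamma> False by (auto simp: H_def)
      have th: "0 < 1 - \<theta>" using theta by simp
      have w1: "v - \<beta> n1 v = (1 - \<theta>) * H / A1"
        using e1.wq[OF \<gamma>] b1 by (simp add: v_def[symmetric] H_def A1_def)
      have w2: "v - \<beta> n2 v = (1 - \<theta>) * H / A2"
        using e2.wq[OF \<gamma>] b2 by (simp add: v_def[symmetric] H_def A2_def)
      have dp: "0 < \<beta> n2 v - \<beta> n1 v" using dpos[OF vv] .
      have diff: "\<beta> n2 v - \<beta> n1 v = (1 - \<theta>) * H * (1 / A1 - 1 / A2)"
      proof -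
        have "\<beta> n2 v - \<beta> n1 v = (v - \<beta> n1 v) - (v - \<beta> n2 v)" by simp
        also have "\<dots> = (1 - \<theta>) * H * (1 / A1 - 1 / A2)" unfolding w1 w2 using A1 A2 by (simp add: field_simps)
        finally show ?thesis .
      qed
      have nz: "1 / A1 - 1 / A2 \<noteq> 0" using diff dp by auto
      have "(\<beta> n2 v - \<beta> n1 v) / (1 - \<theta>) * inverse (1 / A1 - 1 / A2) = H"
        unfolding diff using th H nz by (simp add: field_simps)
      then show ?thesis using b1 b2 by (simp add: H_def A1_def A2_def)
    qed
  qed
  have P3: "\<forall>\<gamma>\<in>{0<..1}. D \<gamma> = exp (- integral {\<gamma>..1} (\<lambda>t. 1 / (D t / Dp t)))"
    using D_integral[OF D(1) _ D(5)] e1.D_pos by blast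
  have P4: "\<forall>\<gamma>\<in>{0..1}. \<forall>n\<in>{n1, n2}.
          quantile_on vl vh F0 \<gamma> = bid_quantile F0 vl vh (\<beta> n) \<gamma>
             + (1 - \<theta>) * (D \<gamma> / Dp \<gamma>) / ((real n - 1) * g n (bid_quantile F0 vl vh (\<beta> n) \<gamma>))"
    using e1.vq e2.vq by auto
  show ?thesis using P1 P2 P3 P4 by blast
qed

end
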